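(* Let $d\ge2$, let $\mathcal L\subset\mathbb R^d$ be a unimodular lattice and let $\vec\alpha\in\mathbb R^d$ be badly approximable by $\mathbb Q\mathcal L$. For every $\mathcal D\subseteq\mathbb S_1^{d-1}$ with non-empty interior, $$\sup_{N\in\mathbb N} g_N(\mathcal D,\vec\alpha,\mathcal L)<\infty.$$
   Context: $\mathbb S_1^{d-1}$ is the unit sphere in $\mathbb R^d$. A unimodular lattice is a lattice of covolume $1$. $\vec\alpha$ is badly approximable by $\mathbb Q\mathcal L$ if there is $c>0$ with $|n\vec\alpha-\vec\ell|_\infty>c\,n^{-1/d}$ for all $\vec\ell\in\mathcal L$ and $n\in\mathbb N$ ($|\cdot|_\infty$ the maximum norm). For $\mathcal D\subseteq\mathbb S_1^{d-1}$ and $1\le n\le N$, let $$\delta_{n,N}(\mathcal D)=\min\{|(m-n)\vec\alpha+\vec\ell| : (m-n)\vec\alpha+\vec\ell\in\mathbb R_{>0}\mathcal D,\ 1\le m\le N,\ \vec\ell\in\mathcal L\}$$ (Euclidean norm) and $g_N(\mathcal D,\vec\alpha,\mathcal L)=|\{\delta_{n,N}(\mathcal D):1\le n\le N\}|$. *)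

theory Defs
  imports "HOL-Analysis.Analysis"
begin

definition lattice_of :: "real^'n^'n \<Rightarrow> (real^'n) set" where
  "lattice_of M = {M *v z | z. \<forall>i. z $ i \<in> \<int>}"

definition unimodular_lattice :: "(real^'n) set \<Rightarrow> bool" where
  "unimodular_lattice L \<longleftrightarrow> (\<exists>M. \<bar>det M\<bar> = 1 \<and> L = lattice_of M)"

text \<open>alpha badly approximable by QL (maximum norm = infnorm).\<close>
definition bad_approx :: "real^'n \<Rightarrow> (real^'n) set \<Rightarrow> bool" where
  "bad_approx \<alpha> L \<longleftrightarrow> (\<exists>c>0. \<forall>n::nat. n \<ge> 1 \<longrightarrow> (\<forall>l\<in>L.
      infnorm (real n *\<^sub>R \<alpha> - l) > c * real n powr (-1 / real CARD('n))))"

definition pos_cone :: "(real^'n) set \<Rightarrow> (real^'n) set" where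
  "pos_cone D = {t *\<^sub>R u | t u. t > 0 \<and> u \<in> D}"

definition delta :: "(real^'n) set \<Rightarrow> real^'n \<Rightarrow> (real^'n) set \<Rightarrow> nat \<Rightarrow> nat \<Rightarrow> real" where
  "delta D \<alpha> L n N = Inf {norm ((real m - real n) *\<^sub>R \<alpha> + l) | m l.
      1 \<le> m \<and> m \<le> N \<and> l \<in> L \<and> (real m - real n) *\<^sub>R \<alpha> + l \<in> pos_cone D}"

definition gN :: "nat \<Rightarrow> (real^'n) set \<Rightarrow> real^'n \<Rightarrow> (real^'n) set \<Rightarrow> nat" where
  "gN N D \<alpha> L = card ((\<lambda>n. delta D \<alpha> L n N) ` {1..N})"

end

theory Submission
  imports Defs
begin

lemma infnorm_le_cart:
  fixes x :: "real^'n"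
  assumes "\<And>i. \<bar>x$i\<bar> \<le> b" shows "infnorm x \<le> b"
  unfolding infnorm_cart by (rule cSup_least) (use assms in auto)

lemma mat_infnorm_bound:
  fixes A :: "real^'n^'m" and y :: "real^'n"
  shows "infnorm (A *v y) \<le> (\<Sum>i\<in>UNIV. \<Sum>j\<in>UNIV. \<bar>A$i$j\<bar>) * infnorm y"
proof (rule infnorm_le_cart)
  fix i
  have "\<bar>(A *v y)$i\<bar> = \<bar>\<Sum>j\<in>UNIV. A$i$j * y$j\<bar>" by (simp add: matrix_vector_mult_def)
  also have "\<dots> \<le> (\<Sum>j\<in>UNIV. \<bar>A$i$j\<bar> * infnorm y)"
    by (rule order_trans[OF sum_abs]) (auto intro!: sum_mono simp: abs_mult mult_left_mono component_le_infnorm_cart)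
  also have "\<dots> = (\<Sum>j\<in>UNIV. \<bar>A$i$j\<bar>) * infnorm y" by (simp add: sum_distrib_right)
  also have "\<dots> \<le> (\<Sum>i\<in>UNIV. \<Sum>j\<in>UNIV. \<bar>A$i$j\<bar>) * infnorm y"
    by (rule mult_right_mono) (auto intro!: member_le_sum sum_nonneg simp: infnorm_pos_le)
  finally show "\<bar>(A *v y)$i\<bar> \<le> (\<Sum>i\<in>UNIV. \<Sum>j\<in>UNIV. \<bar>A$i$j\<bar>) * infnorm y" .
qed

lemma lattice_zero: "0 \<in> lattice_of M"
  unfolding lattice_of_def by (rule CollectI, rule exI[of _ 0]) auto

lemma lattice_add: "x \<in> lattice_of M \<Longrightarrow> y \<in> lattice_of M \<Longrightarrow> x + y \<in> lattice_of M"
proof -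
  assume "x \<in> lattice_of M" "y \<in> lattice_of M"
  then obtain z w where "\<forall>i. z $ i \<in> \<int>" "x = M *v z" "\<forall>i. w $ i \<in> \<int>" "y = M *v w"
    unfolding lattice_of_def by blast
  then show ?thesis unfolding lattice_of_def
    by (intro CollectI exI[of _ "z + w"]) (auto simp: matrix_vector_right_distrib)
qed

lemma lattice_diff: "x \<in> lattice_of M \<Longrightarrow> y \<in> lattice_of M \<Longrightarrow> x - y \<in> lattice_of M"
proof -
  assume "x \<in> lattice_of M" "y \<in> lattice_of M"
  then obtain z w where "\<forall>i. z $ i \<in> \<int>" "x = M *v z" "\<forall>i. w $ i \<in> \<int>" "y = M *v w"
    unfolding lattice_of_def by blast
  then show ?thesis unfolding lattice_of_def
    by (intro CollectI exI[of _ "z - w"]) (auto simp: matrix_vector_mult_diff_distrib)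
qed

lemma lattice_neg: "x \<in> lattice_of M \<Longrightarrow> - x \<in> lattice_of M"
  using lattice_diff[OF lattice_zero, of x M] by simp

lemma lattice_reps:
  fixes M :: "real^'n^'n"
  assumes "L = lattice_of M" "det M \<noteq> 0"
  shows "\<exists>D0\<ge>0. \<forall>x. \<exists>l\<in>L. infnorm (x - l) \<le> D0"
proof -
  obtain A' where A': "M ** A' = mat 1" "A' ** M = mat 1"
    using assms(2) invertible_det_nz[of M] unfolding invertible_def by blast
  define D0 where "D0 = (\<Sum>i\<in>UNIV. \<Sum>j\<in>UNIV. \<bar>M$i$j\<bar>)"
  have "D0 \<ge> 0" unfolding D0_def by (auto intro!: sum_nonneg)
  moreover have "\<exists>l\<in>L. infnorm (x - l) \<le> D0" for x
  proof -
    define y where "y = A' *v x"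
    define z where "z = ((\<chi> i. of_int \<lfloor>y$i\<rfloor>) :: real^'n)"
    have xy: "x = M *v y" unfolding y_def by (simp add: matrix_vector_mul_assoc A')
    have zL: "M *v z \<in> L" unfolding assms(1) lattice_of_def z_def by auto
    have D0: "D0 \<ge> 0" unfolding D0_def by (auto intro!: sum_nonneg)
    have yz: "infnorm (y - z) \<le> 1"
    proof (rule infnorm_le_cart)
      fix i
      have "(y - z) $ i = y$i - of_int \<lfloor>y$i\<rfloor>" by (simp add: z_def)
      then show "\<bar>(y - z) $ i\<bar> \<le> 1"
        using of_int_floor_le[of "y$i"] real_of_int_floor_add_one_gt[of "y$i"] by linarith
    qed
    have "infnorm (x - M *v z) = infnorm (M *v (y - z))"
      unfolding xy matrix_vector_mult_diff_distrib by simp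
    also have "\<dots> \<le> D0 * infnorm (y - z)" unfolding D0_def by (rule mat_infnorm_bound)
    also have "\<dots> \<le> D0 * 1" by (rule mult_left_mono) (fact yz, fact D0)
    finally have "infnorm (x - M *v z) \<le> D0" by simp
    with zL show ?thesis by blast
  qed
  ultimately show ?thesis by blast
qed

lemma lattice_min:
  fixes M :: "real^'n^'n"
  assumes "L = lattice_of M" "det M \<noteq> 0"
  shows "\<exists>\<mu>>0. \<forall>l\<in>L. l \<noteq> 0 \<longrightarrow> \<mu> \<le> infnorm l"
proof -
  obtain A' where A': "M ** A' = mat 1" "A' ** M = mat 1"
    using assms(2) invertible_det_nz[of M] unfolding invertible_def by blast
  define S where "S = (\<Sum>i\<in>UNIV. \<Sum>j\<in>UNIV. \<bar>A'$i$j\<bar>)"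
  have S0: "S \<ge> 0" unfolding S_def by (auto intro!: sum_nonneg)
  have "1 / (S + 1) \<le> infnorm l" if lL: "l \<in> L" and l0: "l \<noteq> 0" for l
  proof -
    obtain z where z: "\<forall>i. z $ i \<in> \<int>" "l = M *v z"
      using lL unfolding assms(1) lattice_of_def by blast
    have zl: "z = A' *v l" by (simp add: z(2) matrix_vector_mul_assoc A')
    have "z \<noteq> 0" using l0 z(2) by auto
    then obtain i where "z $ i \<noteq> 0" by (metis vec_eq_iff zero_index)
    moreover obtain k where "z $ i = of_int k" using z(1) Ints_cases by metis
    ultimately have "1 \<le> \<bar>z $ i\<bar>" by auto
    also have "\<dots> \<le> infnorm z" by (rule component_le_infnorm_cart)
    also have "\<dots> \<le> S * infnorm l" unfolding zl S_def by (rule mat_infnorm_bound)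
    also have "\<dots> \<le> (S + 1) * infnorm l" by (intro mult_right_mono) (auto simp: infnorm_pos_le)
    finally show ?thesis using S0 by (simp add: field_simps)
  qed
  then show ?thesis using S0 by (intro exI[of _ "1/(S+1)"]) auto
qed

lemma vec_box_bij:
  "bij_betw vec_nth {z::'b^'n. \<forall>i. z$i \<in> S i} (PiE UNIV S)"
proof (rule bij_betwI[where g = vec_lambda])
  show "vec_nth \<in> {z::'b^'n. \<forall>i. z$i \<in> S i} \<rightarrow> PiE UNIV S" by auto
  show "vec_lambda \<in> PiE UNIV S \<rightarrow> {z::'b^'n. \<forall>i. z$i \<in> S i}" by auto
qed auto

lemma vec_box_card:
  assumes "\<And>i. finite (S i)"
  shows "finite {z::'b^'n. \<forall>i. z$i \<in> S i} \<and> card {z::'b^'n. \<forall>i. z$i \<in> S i} = (\<Prod>i\<in>UNIV. card (S i))"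
proof -
  have b: "bij_betw vec_nth {z::'b^'n. \<forall>i. z$i \<in> S i} (PiE UNIV S)" by (rule vec_box_bij)
  have f: "finite (PiE UNIV S)" using assms by (intro finite_PiE) auto
  show ?thesis using bij_betw_finite[OF b] bij_betw_same_card[OF b] f card_PiE[of UNIV S] by auto
qed

lemma grid_count:
  fixes p :: "'a \<Rightarrow> real^'n" and \<beta> :: "'n \<Rightarrow> real"
  assumes bnd: "\<And>x i. x \<in> A \<Longrightarrow> \<bar>p x $ i\<bar> \<le> \<beta> i"
    and sep: "\<And>x y. x \<in> A \<Longrightarrow> y \<in> A \<Longrightarrow> (\<And>i. \<bar>p x $ i - p y $ i\<bar> < 1) \<Longrightarrow> x = y"
  shows "finite A \<and> card A \<le> (\<Prod>i\<in>UNIV. 2 * nat \<lceil>\<beta> i\<rceil> + 1)"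
proof -
  define key where "key x = ((\<chi> i. \<lfloor>p x $ i\<rfloor>) :: int^'n)" for x
  define S where "S i = {- int (nat \<lceil>\<beta> i\<rceil>) .. int (nat \<lceil>\<beta> i\<rceil>)}" for i
  define Box where "Box = {z::int^'n. \<forall>i. z$i \<in> S i}"
  have BC: "finite Box \<and> card Box = (\<Prod>i\<in>UNIV. card (S i))"
    unfolding Box_def by (rule vec_box_card) (simp add: S_def)
  have cS: "card (S i) = 2 * nat \<lceil>\<beta> i\<rceil> + 1" for i
  proof -
    have "card (S i) = nat (2 * int (nat \<lceil>\<beta> i\<rceil>) + 1)" unfolding S_def by simp
    also have "\<dots> = 2 * nat \<lceil>\<beta> i\<rceil> + 1" by (simp add: nat_add_distrib nat_mult_distrib del: of_nat_nat)
    finally show ?thesis .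
  qed
  have inj: "inj_on key A"
  proof (rule inj_onI)
    fix x y assume xy: "x \<in> A" "y \<in> A" "key x = key y"
    have "\<bar>p x $ i - p y $ i\<bar> < 1" for i
    proof -
      have "\<lfloor>p x $ i\<rfloor> = \<lfloor>p y $ i\<rfloor>" using xy(3) unfolding key_def by (metis vec_lambda_beta)
      then have "real_of_int \<lfloor>p x $ i\<rfloor> = real_of_int \<lfloor>p y $ i\<rfloor>" by simp
      then show ?thesis
        using of_int_floor_le[of "p x $ i"] real_of_int_floor_add_one_gt[of "p x $ i"]
          of_int_floor_le[of "p y $ i"] real_of_int_floor_add_one_gt[of "p y $ i"] by linarith
    qed
    then show "x = y" using sep xy by blast
  qed
  have sub: "key ` A \<subseteq> Box"
  proof
    fix z assume "z \<in> key ` A"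
    then obtain x where x: "x \<in> A" "z = key x" by blast
    have "z $ i \<in> S i" for i
    proof -
      have b: "\<bar>p x $ i\<bar> \<le> \<beta> i" using bnd x(1) by blast
      have "z $ i = \<lfloor>p x $ i\<rfloor>" using x(2) unfolding key_def by simp
      moreover have "\<lfloor>p x $ i\<rfloor> \<le> \<lceil>\<beta> i\<rceil>"
      proof -
        have "real_of_int \<lfloor>p x $ i\<rfloor> \<le> real_of_int \<lceil>\<beta> i\<rceil>"
          using b of_int_floor_le[of "p x $ i"] le_of_int_ceiling[of "\<beta> i"] by linarith
        then show ?thesis by linarith
      qed
      moreover have "- \<lceil>\<beta> i\<rceil> \<le> \<lfloor>p x $ i\<rfloor>"
      proof -
        have "real_of_int (- \<lceil>\<beta> i\<rceil>) \<le> p x $ i"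
          using b le_of_int_ceiling[of "\<beta> i"] by linarith
        then show ?thesis by (simp only: le_floor_iff)
      qed
      moreover have "0 \<le> \<beta> i" using b by linarith
      then have "int (nat \<lceil>\<beta> i\<rceil>) = \<lceil>\<beta> i\<rceil>" by simp
      ultimately show ?thesis unfolding S_def by simp
    qed
    then show "z \<in> Box" unfolding Box_def by blast
  qed
  have fA: "finite A" using inj sub BC finite_imageD finite_subset by blast
  have "card A = card (key ` A)" using card_image[OF inj] by simp
  also have "\<dots> \<le> card Box" using sub BC card_mono by blast
  finally show ?thesis using fA BC cS by simp
qed

lemma dir_bound:
  fixes u q :: "'a::real_normed_vector"
  assumes u: "norm u = 1" and t: "t > 0" and v0: "t *\<^sub>R u + q \<noteq> 0"
  shows "norm ((1 / norm (t *\<^sub>R u + q)) *\<^sub>R (t *\<^sub>R u + q) - u) \<le> 2 * norm q / t"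
proof -
  define v where "v = t *\<^sub>R u + q"
  define nv where "nv = norm v"
  have nv: "nv > 0" using v0 unfolding nv_def v_def by simp
  have eq: "(1/nv) *\<^sub>R v - u = ((1/nv) - (1/t)) *\<^sub>R v + (1/t) *\<^sub>R q"
    using t unfolding v_def by (simp add: algebra_simps)
  have "norm ((1/nv) *\<^sub>R v - u) = norm (((1/nv) - (1/t)) *\<^sub>R v + (1/t) *\<^sub>R q)"
    using eq by simp
  also have "\<dots> \<le> norm (((1/nv) - (1/t)) *\<^sub>R v) + norm ((1/t) *\<^sub>R q)"
    by (rule norm_triangle_ineq)
  also have "\<dots> = \<bar>1/nv - 1/t\<bar> * nv + norm q / t"
    using t unfolding nv_def by simp
  also have "\<bar>1/nv - 1/t\<bar> * nv = \<bar>t - nv\<bar> / t"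
    using nv t by (simp add: field_simps abs_div abs_mult)
  also have "\<bar>t - nv\<bar> \<le> norm q"
  proof -
    have "norm (t *\<^sub>R u) = t" using u t by simp
    then have "\<bar>t - nv\<bar> = \<bar>norm (t *\<^sub>R u) - norm v\<bar>" unfolding nv_def by simp
    also have "\<dots> \<le> norm (t *\<^sub>R u - v)" by (rule norm_triangle_ineq3)
    also have "t *\<^sub>R u - v = - q" unfolding v_def by simp
    finally show ?thesis by simp
  qed
  then have "\<bar>t - nv\<bar> / t \<le> norm q / t" using t by (simp add: divide_right_mono)
  finally show ?thesis unfolding v_def nv_def by simp
qed

lemma core:
  fixes \<alpha> :: "real^'n" and Mx :: "real^'n^'n" and D :: "(real^'n) set" and u0 :: "real^'n"
  assumes L: "L = lattice_of Mx" and det: "det Mx \<noteq> 0"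
    and c: "c > 0"
    and bad: "\<And>n l. n \<ge> 1 \<Longrightarrow> l \<in> L \<Longrightarrow> infnorm (real n *\<^sub>R \<alpha> - l) > c * real n powr (-1 / real CARD('n))"
    and u0: "norm u0 = 1" and eta: "\<eta> > 0"
    and cone: "\<And>x. norm x = 1 \<Longrightarrow> norm (x - u0) < \<eta> \<Longrightarrow> x \<in> D"
  shows "\<exists>R>0. \<exists>N0. \<forall>M\<ge>N0. \<exists>K\<in>{1..M}. \<exists>l\<in>L. real K *\<^sub>R \<alpha> + l \<in> pos_cone D \<and>
            norm (real K *\<^sub>R \<alpha> + l) \<le> R * real M powr (-1 / real CARD('n))"
proof -
  define d where "d = CARD('n)"
  have d1: "d \<ge> 1" unfolding d_def by (simp add: Suc_le_eq)
  obtain D0 where D0: "D0 \<ge> 0" "\<And>x. \<exists>l\<in>L. infnorm (x - l) \<le> D0"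
    using lattice_reps[OF L det] by blast
  have "\<forall>j::nat. \<exists>l. l \<in> L \<and> infnorm (real j *\<^sub>R \<alpha> - l) \<le> D0" using D0(2) by blast
  then have "\<exists>lj. \<forall>j::nat. lj j \<in> L \<and> infnorm (real j *\<^sub>R \<alpha> - lj j) \<le> D0" by (rule choice)
  then obtain lj where lj: "\<And>j::nat. lj j \<in> L" "\<And>j. infnorm (real j *\<^sub>R \<alpha> - lj j) \<le> D0"
    by blast
  define r where "r j = real j *\<^sub>R \<alpha> - lj j" for j
  have "u0 \<noteq> 0" using u0 by auto
  then obtain i0 where i0: "u0 $ i0 \<noteq> 0" by (metis vec_eq_iff zero_index)
  define a where "a = \<bar>u0 $ i0\<bar>"
  have a: "a > 0" using i0 a_def by simp
  define tt where "tt x = x $ i0 / u0 $ i0" for x :: "real^'n"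
  define Q where "Q x = x - tt x *\<^sub>R u0" for x
  have Qi0: "Q x $ i0 = 0" for x unfolding Q_def tt_def using i0 by simp
  have decomp: "x = tt x *\<^sub>R u0 + Q x" for x unfolding Q_def by simp
  have tt_diff: "tt (x - y) = tt x - tt y" for x y unfolding tt_def by (simp add: diff_divide_distrib)
  have Q_diff: "Q (x - y) = Q x - Q y" for x y unfolding Q_def tt_diff by (simp add: algebra_simps)
  have u0c: "\<bar>u0 $ i\<bar> \<le> 1" for i
    using component_le_infnorm_cart[of u0 i] infnorm_le_norm[of u0] u0 by linarith
  define T0 where "T0 = D0 / a"
  have T0: "T0 \<ge> 0" unfolding T0_def using D0 a by simp
  have tr: "\<bar>tt (r j)\<bar> \<le> T0" for j
  proof -
    have "\<bar>r j $ i0\<bar> \<le> D0" using component_le_infnorm_cart[of "r j" i0] lj(2)[of j] unfolding r_def by linarith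
    then show ?thesis unfolding tt_def T0_def a_def by (simp add: abs_div divide_right_mono)
  qed
  define D2 where "D2 = D0 + T0"
  have D2: "D2 \<ge> 0" unfolding D2_def using D0 T0 by simp
  have Qr: "\<bar>Q (r j) $ i\<bar> \<le> D2" for j i
  proof -
    have 1: "\<bar>r j $ i\<bar> \<le> D0" using component_le_infnorm_cart[of "r j" i] lj(2)[of j] unfolding r_def by linarith
    have "\<bar>tt (r j)\<bar> * \<bar>u0 $ i\<bar> \<le> T0 * 1" by (rule mult_mono) (use tr u0c T0 in auto)
    then have 2: "\<bar>tt (r j) * u0 $ i\<bar> \<le> T0" by (simp add: abs_mult)
    have "Q (r j) $ i = r j $ i - tt (r j) * u0 $ i" unfolding Q_def by simp
    then show ?thesis using 1 2 unfolding D2_def by linarith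
  qed
  define X where "X = T0 + 1"
  define A where "A = 2 * (2*X+3) * (2*D2+3)^(d-1)"
  have A1: "A \<ge> 1"
  proof -
    have "(1::real) \<le> (2*D2+3)^(d-1)" using D2 by (intro one_le_power) simp
    moreover have "2*X+3 \<ge> 1" unfolding X_def using T0 by simp
    ultimately have "1 * 1 \<le> (2*X+3) * (2*D2+3)^(d-1)" by (intro mult_mono) auto
    moreover have "A = 2 * ((2*X+3) * (2*D2+3)^(d-1))" unfolding A_def by simp
    ultimately show ?thesis by linarith
  qed
  define \<epsilon> where "\<epsilon> = min 1 (\<eta> / (4 * sqrt d))"
  have sd0: "sqrt d > 0" using d1 by simp
  have eps: "\<epsilon> > 0" "\<epsilon> \<le> 1" "2 * sqrt d * \<epsilon> < \<eta>"
  proof -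
    show "\<epsilon> > 0" "\<epsilon> \<le> 1" unfolding \<epsilon>_def using eta sd0 by auto
    have "\<epsilon> \<le> \<eta> / (4 * sqrt d)" unfolding \<epsilon>_def by simp
    then have "2 * sqrt d * \<epsilon> \<le> 2 * sqrt d * (\<eta> / (4 * sqrt d))" using sd0 by (intro mult_left_mono) auto
    also have "\<dots> = \<eta> / 2" using sd0 by simp
    finally show "2 * sqrt d * \<epsilon> < \<eta>" using eta by simp
  qed
  have epow: "\<epsilon>^(d-1) > 0" "\<epsilon>^(d-1) \<le> 1" using eps by (auto intro: power_le_one)
  define Y where "Y = 3 * A / \<epsilon>^(d-1) + sqrt d * \<epsilon> + 1"
  have Y: "Y > 0" unfolding Y_def using A1 epow eps sd0 by (simp add: add_pos_pos)
  define \<delta> where "\<delta> = min (1/4) ((Y/c) powr (- real d) / 2)"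
  have del: "\<delta> > 0" "\<delta> \<le> 1/4" unfolding \<delta>_def using Y c by auto
  have delY: "(2*\<delta>) powr (-1/real d) \<ge> Y / c"
  proof -
    have le: "2*\<delta> \<le> (Y/c) powr (- real d)" unfolding \<delta>_def by simp
    have "((Y/c) powr (- real d)) powr (-1/real d) \<le> (2*\<delta>) powr (-1/real d)"
      by (rule powr_mono2') (use le del d1 in auto)
    moreover have "((Y/c) powr (- real d)) powr (-1/real d) = Y/c"
      using d1 Y c by (simp add: powr_powr powr_one)
    ultimately show ?thesis by simp
  qed
  define H where "H = A / (\<delta> * \<epsilon>^(d-1))"
  have H: "H > 0" unfolding H_def using A1 del epow by simp
  have dHe: "\<delta> * H * \<epsilon>^(d-1) = A" unfolding H_def using del epow eps by simp
  have dH: "\<delta> * H = A / \<epsilon>^(d-1)" using dHe epow eps by (simp add: eq_divide_eq)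
  define s0 where "s0 = min 1 (1/H)"
  have s0: "s0 > 0" "s0 \<le> 1" "s0 \<le> 1/H" unfolding s0_def using H by auto
  define N0 where "N0 = nat \<lceil>s0 powr (- real d)\<rceil> + 1"
  define R where "R = 2*H + sqrt d * \<epsilon>"
  have R: "R > 0" unfolding R_def using H eps sd0 by (simp add: add_pos_pos)
  show ?thesis
  proof (intro exI[of _ R] conjI R exI[of _ N0] allI impI)
    fix M assume MN0: "M \<ge> N0"
    have M1: "M \<ge> 1" using MN0 unfolding N0_def by simp
    have Mge: "real M \<ge> s0 powr (- real d)"
    proof -
      have "s0 powr (- real d) \<le> real (nat \<lceil>s0 powr (- real d)\<rceil>)" by linarith
      also have "\<dots> \<le> real M" using MN0 unfolding N0_def by simp
      finally show ?thesis .
    qed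
    define s where "s = real M powr (-1/real d)"
    have spos: "s > 0" unfolding s_def using M1 by simp
    have ss0: "s \<le> s0"
    proof -
      have "s \<le> (s0 powr (- real d)) powr (-1/real d)" unfolding s_def
        by (rule powr_mono2') (use Mge s0 d1 in auto)
      also have "\<dots> = s0" using s0 d1 by (simp add: powr_powr powr_one)
      finally show ?thesis .
    qed
    have sd: "s^d = 1 / real M"
    proof -
      have "s^d = s powr real d" using spos by (simp add: powr_realpow)
      also have "\<dots> = real M powr (-1)" unfolding s_def using d1 by (simp add: powr_powr)
      also have "\<dots> = 1 / real M" using M1 by (simp add: powr_neg_one)
      finally show ?thesis .
    qed
    define h where "h = H * s"
    define w where "w = \<epsilon> * s"
    have h: "h > 0" "h \<le> 1" "\<delta> * h \<le> 1" "\<delta> * h > 0"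
    proof -
      show "h > 0" unfolding h_def using H spos by simp
      have "H * s \<le> H * (1/H)" using ss0 s0 H by (intro mult_left_mono) auto
      then show "h \<le> 1" unfolding h_def using H by simp
      then show "\<delta> * h \<le> 1" using del \<open>h > 0\<close> by (intro mult_le_one) auto
      show "\<delta> * h > 0" using del \<open>h > 0\<close> by simp
    qed
    have w: "w > 0" "w \<le> 1" unfolding w_def using eps spos ss0 s0 by (auto simp: mult_le_one)
    define p where "p j = (\<chi> i. if i = i0 then (real j * h / real M - tt (r j)) / (\<delta> * h) else Q (r j) $ i / w)" for j
    define \<beta> where "\<beta> i = (if i = i0 then (T0 + h) / (\<delta> * h) else D2 / w)" for i
    have coll: "\<exists>j\<in>{0..M}. \<exists>j'\<in>{0..M}. j' < j \<and> (\<forall>i. \<bar>p j $ i - p j' $ i\<bar> < 1)"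
    proof (rule ccontr)
      assume nc: "\<not> ?thesis"
      have bnd: "\<bar>p j $ i\<bar> \<le> \<beta> i" if "j \<in> {0..M}" for j i
      proof (cases "i = i0")
        case True
        have "0 \<le> real j * h / real M" using h by simp
        moreover have "real j * h / real M \<le> h"
          using that M1 h by (simp add: field_simps mult_right_mono)
        ultimately have "\<bar>real j * h / real M - tt (r j)\<bar> \<le> T0 + h" using tr[of j] by linarith
        then have "\<bar>real j * h / real M - tt (r j)\<bar> / (\<delta> * h) \<le> (T0 + h) / (\<delta> * h)"
          using h by (simp add: divide_right_mono)
        then show ?thesis using True h(4) unfolding p_def \<beta>_def by (simp add: abs_div)
      next
        case False
        have "\<bar>Q (r j) $ i\<bar> / w \<le> D2 / w" using Qr[of j i] w by (simp add: divide_right_mono)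
        then show ?thesis using False w unfolding p_def \<beta>_def by (simp add: abs_div)
      qed
      have sep: "j = j'" if "j \<in> {0..M}" "j' \<in> {0..M}" "\<And>i. \<bar>p j $ i - p j' $ i\<bar> < 1" for j j'
      proof (rule ccontr)
        assume "j \<noteq> j'"
        then consider "j' < j" | "j < j'" by linarith
        then show False
        proof cases
          case 1 then show False using nc that by blast
        next
          case 2
          have "\<forall>i. \<bar>p j' $ i - p j $ i\<bar> < 1" using that(3) by (simp add: abs_minus_commute)
          then show False using nc that 2 by blast
        qed
      qed
      have "finite {0..M} \<and> card {0..M} \<le> (\<Prod>i\<in>UNIV. 2 * nat \<lceil>\<beta> i\<rceil> + 1)"
        by (rule grid_count) (use bnd sep in auto)
      then have "M + 1 \<le> (\<Prod>i\<in>UNIV. 2 * nat \<lceil>\<beta> i\<rceil> + 1)" by simp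
      then have "real (M + 1) \<le> real (\<Prod>i\<in>UNIV. 2 * nat \<lceil>\<beta> i\<rceil> + 1)" by (simp only: of_nat_le_iff)
      also have "\<dots> = (\<Prod>i\<in>UNIV. real (2 * nat \<lceil>\<beta> i\<rceil> + 1))" by (simp only: of_nat_prod)
      also have "\<dots> \<le> (\<Prod>i\<in>UNIV. 2 * \<beta> i + 3)"
      proof (rule prod_mono)
        fix i :: 'n
        have b0: "\<beta> i \<ge> 0" unfolding \<beta>_def using T0 h D2 w by auto
        then have "real (nat \<lceil>\<beta> i\<rceil>) = real_of_int \<lceil>\<beta> i\<rceil>" by simp
        then have "real (2 * nat \<lceil>\<beta> i\<rceil> + 1) \<le> 2 * \<beta> i + 3"
          using ceiling_correct[of "\<beta> i"] by simp
        then show "0 \<le> real (2 * nat \<lceil>\<beta> i\<rceil> + 1) \<and> real (2 * nat \<lceil>\<beta> i\<rceil> + 1) \<le> 2 * \<beta> i + 3"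
          by simp
      qed
      also have "\<dots> = (2 * \<beta> i0 + 3) * (2 * (D2 / w) + 3)^(d-1)"
      proof -
        have "(\<Prod>i\<in>UNIV. 2 * \<beta> i + 3) = (2 * \<beta> i0 + 3) * (\<Prod>i\<in>UNIV-{i0}. 2 * \<beta> i + 3)"
          by (simp add: prod.remove)
        also have "(\<Prod>i\<in>UNIV-{i0}. 2 * \<beta> i + 3) = (\<Prod>i\<in>UNIV-{i0}. 2 * (D2 / w) + 3)"
          by (rule prod.cong) (auto simp: \<beta>_def)
        also have "\<dots> = (2 * (D2 / w) + 3)^(d-1)" by (simp add: card_Diff_singleton d_def)
        finally show ?thesis .
      qed
      also have "\<dots> \<le> ((2*X+3) / (\<delta>*h)) * ((2*D2+3)/w)^(d-1)"
      proof (rule mult_mono)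
        have "2 * \<beta> i0 + 3 = 2 * (T0 + h) / (\<delta> * h) + 3" unfolding \<beta>_def by simp
        also have "\<dots> \<le> 2 * X / (\<delta> * h) + 3 / (\<delta> * h)"
        proof -
          have "2 * (T0 + h) / (\<delta> * h) \<le> 2 * X / (\<delta> * h)" unfolding X_def
            using h by (intro divide_right_mono) auto
          moreover have "3 \<le> 3 / (\<delta> * h)" using h by (simp add: field_simps)
          ultimately show ?thesis by linarith
        qed
        also have "\<dots> = (2*X+3) / (\<delta>*h)" by (simp add: add_divide_distrib)
        finally show "2 * \<beta> i0 + 3 \<le> (2*X+3) / (\<delta>*h)" .
        have "2 * (D2 / w) + 3 \<le> (2*D2+3)/w"
        proof -
          have "3 \<le> 3 / w" using w by (simp add: field_simps)
          then show ?thesis by (simp add: add_divide_distrib)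
        qed
        then show "(2 * (D2 / w) + 3)^(d-1) \<le> ((2*D2+3)/w)^(d-1)"
          by (rule power_mono) (use D2 w in simp)
        show "0 \<le> (2 * (D2 / w) + 3)^(d-1)" using D2 w by simp
        show "0 \<le> (2*X+3) / (\<delta>*h)" using h T0 unfolding X_def by simp
      qed
      also have "\<dots> = real M / 2"
      proof -
        have "\<delta> * h * w^(d-1) = A * (s * s^(d-1))"
          unfolding h_def w_def using dHe by (simp add: power_mult_distrib algebra_simps)
        also have "s * s^(d-1) = s^d" using d1 by (simp add: power_eq_if)
        finally have e: "\<delta> * h * w^(d-1) = A / real M" using sd by simp
        have "((2*X+3) / (\<delta>*h)) * ((2*D2+3)/w)^(d-1) = (2*X+3) * (2*D2+3)^(d-1) / (\<delta> * h * w^(d-1))"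
          by (simp add: power_divide)
        also have "\<dots> = (A/2) / (A / real M)"
        proof -
          have P: "(2*X+3) * (2*D2+3)^(d-1) = A/2" unfolding A_def by simp
          show ?thesis by (simp only: P e)
        qed
        also have "\<dots> = real M / 2" using A1 M1 by (simp add: field_simps)
        finally show ?thesis .
      qed
      finally show False using M1 by simp
    qed
    then obtain j j' where jj: "j \<in> {0..M}" "j' \<in> {0..M}" "j' < j" "\<And>i. \<bar>p j $ i - p j' $ i\<bar> < 1"
      by blast
    define K where "K = j - j'"
    have K: "K \<ge> 1" "K \<le> M" "real K = real j - real j'" using jj unfolding K_def by auto
    define l where "l = lj j' - lj j"
    have lL: "l \<in> L" unfolding l_def L using lattice_diff lj(1) L by metis
    define v where "v = r j - r j'"
    have v: "v = real K *\<^sub>R \<alpha> + l" unfolding v_def r_def l_def K(3) by (simp add: algebra_simps)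
    have v2: "v = real K *\<^sub>R \<alpha> - (lj j - lj j')" unfolding v_def r_def K(3) by (simp add: algebra_simps)
    have tv: "\<bar>real K * h / real M - tt v\<bar> < \<delta> * h"
    proof -
      have "\<bar>(real j * h / real M - tt (r j)) / (\<delta> * h) - (real j' * h / real M - tt (r j')) / (\<delta> * h)\<bar> < 1"
        using jj(4)[of i0] unfolding p_def by simp
      then have "\<bar>((real j * h / real M - tt (r j)) - (real j' * h / real M - tt (r j'))) / (\<delta> * h)\<bar> < 1"
        by (simp add: diff_divide_distrib)
      then have "\<bar>(real j * h / real M - tt (r j)) - (real j' * h / real M - tt (r j'))\<bar> < \<delta> * h"
        using h by (simp add: abs_div)
      moreover have "(real j * h / real M - tt (r j)) - (real j' * h / real M - tt (r j')) = real K * h / real M - tt v"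
        unfolding v_def tt_diff K(3) by (simp add: algebra_simps diff_divide_distrib)
      ultimately show ?thesis by simp
    qed
    have dh: "\<delta> * h = A / \<epsilon>^(d-1) * s" unfolding h_def using dH by (simp add: mult.assoc[symmetric])
    have tv1: "real K * h / real M - tt v < \<delta> * h" and tv2: "tt v - real K * h / real M < \<delta> * h"
      using tv by (simp_all add: abs_less_iff)
    have Qv: "infnorm (Q v) \<le> w"
    proof (rule infnorm_le_cart)
      fix i
      show "\<bar>Q v $ i\<bar> \<le> w"
      proof (cases "i = i0")
        case True then show ?thesis using Qi0 w by simp
      next
        case False
        have "\<bar>Q (r j) $ i / w - Q (r j') $ i / w\<bar> < 1" using jj(4)[of i] False unfolding p_def by simp
        then have "\<bar>(Q (r j) $ i - Q (r j') $ i) / w\<bar> < 1" by (simp add: diff_divide_distrib)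
        then have "\<bar>Q (r j) $ i - Q (r j') $ i\<bar> < w" using w by (simp add: abs_div)
        then show ?thesis unfolding v_def Q_diff by simp
      qed
    qed
    have nQv: "norm (Q v) \<le> sqrt d * w"
    proof -
      have "norm (Q v) \<le> sqrt (real DIM(real^'n)) * infnorm (Q v)" by (rule norm_le_infnorm)
      also have "\<dots> \<le> sqrt d * w" using Qv unfolding d_def by (simp add: mult_left_mono)
      finally show ?thesis .
    qed
    have nv: "norm v \<le> \<bar>tt v\<bar> + norm (Q v)"
    proof -
      have "norm v = norm (tt v *\<^sub>R u0 + Q v)" using decomp[of v] by simp
      also have "\<dots> \<le> norm (tt v *\<^sub>R u0) + norm (Q v)" by (rule norm_triangle_ineq)
      finally show ?thesis using u0 by simp
    qed
    show "\<exists>K\<in>{1..M}. \<exists>l\<in>L. real K *\<^sub>R \<alpha> + l \<in> pos_cone D \<and> norm (real K *\<^sub>R \<alpha> + l) \<le> R * real M powr (-1 / real CARD('n))"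
    proof (cases "real K \<le> 2 * \<delta> * real M")
      case True
      have "real K * h / real M \<le> 2 * (\<delta> * h)"
        using True M1 h by (simp add: field_simps mult_right_mono)
      moreover have "0 \<le> real K * h / real M" using h by simp
      ultimately have "tt v \<le> 3 * (\<delta> * h)" "- tt v \<le> 3 * (\<delta> * h)" using tv1 tv2 by linarith+
      then have "\<bar>tt v\<bar> \<le> 3 * (\<delta> * h)" by (simp add: abs_le_iff)
      then have "norm v \<le> 3 * (\<delta> * h) + sqrt d * w" using nv nQv by linarith
      also have "3 * (\<delta> * h) = 3 * A / \<epsilon>^(d-1) * s"
        unfolding h_def using dH by (simp add: mult.assoc[symmetric])
      finally have nvb: "norm v \<le> (3 * A / \<epsilon>^(d-1) + sqrt d * \<epsilon>) * s" unfolding w_def by (simp add: algebra_simps)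
      have "lj j - lj j' \<in> L" using lattice_diff lj(1) L by metis
      then have b: "infnorm v > c * real K powr (-1 / real d)" using bad[of K "lj j - lj j'"] K v2 unfolding d_def by simp
      have "(2 * \<delta> * real M) powr (-1 / real d) \<le> real K powr (-1 / real d)"
        by (rule powr_mono2') (use True K d1 in auto)
      moreover have "(2 * \<delta> * real M) powr (-1 / real d) = (2 * \<delta>) powr (-1 / real d) * s"
        unfolding s_def by (simp add: powr_mult)
      ultimately have "(2 * \<delta>) powr (-1 / real d) * s \<le> real K powr (-1 / real d)" by simp
      moreover have "Y / c * s \<le> (2 * \<delta>) powr (-1 / real d) * s" using delY spos by (intro mult_right_mono) auto
      ultimately have "Y / c * s \<le> real K powr (-1 / real d)" by linarith
      then have "c * (Y / c * s) \<le> c * real K powr (-1 / real d)" using c by (intro mult_left_mono) auto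
      then have "Y * s \<le> c * real K powr (-1 / real d)" using c by simp
      then have "infnorm v > Y * s" using b by linarith
      moreover have "infnorm v \<le> norm v" by (rule infnorm_le_norm)
      moreover have "(3 * A / \<epsilon>^(d-1) + sqrt d * \<epsilon>) * s < Y * s" unfolding Y_def using spos by simp
      ultimately have False using nvb by linarith
      then show ?thesis ..
    next
      case False
      have "real K * h / real M > 2 * (\<delta> * h)"
        using False M1 h by (simp add: field_simps)
      then have ttv: "tt v > \<delta> * h" using tv1 by linarith
      have "real K * h / real M \<le> h" using K M1 h by (simp add: field_simps mult_right_mono)
      moreover have "\<delta> * h \<le> 1 * h" using del h by (intro mult_right_mono) auto
      ultimately have ttv2: "tt v \<le> 2 * h" using tv2 by linarith
      have ttp: "tt v > 0" using ttv h(4) by linarith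
      have vne: "v \<noteq> 0"
      proof
        assume "v = 0"
        then have "tt v = 0" unfolding tt_def by simp
        then show False using ttv h by simp
      qed
      have v0: "tt v *\<^sub>R u0 + Q v \<noteq> 0" using decomp[of v] vne by simp
      have "norm ((1 / norm (tt v *\<^sub>R u0 + Q v)) *\<^sub>R (tt v *\<^sub>R u0 + Q v) - u0) \<le> 2 * norm (Q v) / tt v"
        by (rule dir_bound) (use u0 ttp v0 in auto)
      then have db: "norm ((1 / norm v) *\<^sub>R v - u0) \<le> 2 * norm (Q v) / tt v" using decomp[of v] by simp
      have "2 * norm (Q v) / tt v \<le> 2 * (sqrt d * w) / (\<delta> * h)"
        using nQv ttv h w sd0 by (intro frac_le) auto
      also have "\<dots> = 2 * sqrt d * \<epsilon> * \<epsilon>^(d-1) / A"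
        unfolding dh unfolding w_def using spos epow A1 by (simp add: field_simps)
      also have "\<dots> \<le> 2 * sqrt d * \<epsilon>"
      proof -
        have "2 * sqrt d * \<epsilon> * \<epsilon>^(d-1) \<le> 2 * sqrt d * \<epsilon> * 1" using epow eps sd0 by (intro mult_left_mono) auto
        also have "\<dots> \<le> 2 * sqrt d * \<epsilon> * A" using A1 eps sd0 by (intro mult_left_mono) auto
        finally show ?thesis using A1 by (simp add: field_simps)
      qed
      finally have dir: "norm ((1 / norm v) *\<^sub>R v - u0) < \<eta>" using db eps by linarith
      have "(1 / norm v) *\<^sub>R v \<in> D" using cone[OF _ dir] vne by simp
      then have vc: "v \<in> pos_cone D" unfolding pos_cone_def using vne
        by (intro CollectI exI[of _ "norm v"] exI[of _ "(1 / norm v) *\<^sub>R v"]) auto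
      have "\<bar>tt v\<bar> = tt v" using ttv h by simp
      then have "norm v \<le> 2 * h + sqrt d * w" using nv nQv ttv2 by linarith
      also have "\<dots> = R * s" unfolding h_def w_def R_def by (simp add: algebra_simps)
      finally have nb: "norm v \<le> R * real M powr (-1 / real CARD('n))" unfolding s_def d_def .
      have "K \<in> {1..M}" using K(1,2) by simp
      then show ?thesis using lL vc[unfolded v] nb[unfolded v] by blast
    qed
  qed
qed

lemma packing:
  fixes \<alpha> :: "real^'n" and Mx :: "real^'n^'n"
  assumes L: "L = lattice_of Mx" and mu: "\<mu> > 0" "\<And>l. l \<in> L \<Longrightarrow> l \<noteq> 0 \<Longrightarrow> \<mu> \<le> infnorm l"
    and c: "c > 0"
    and bad: "\<And>n l. n \<ge> 1 \<Longrightarrow> l \<in> L \<Longrightarrow> infnorm (real n *\<^sub>R \<alpha> - l) > c * real n powr (-1 / real CARD('n))"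
    and R: "R > 0"
  shows "\<exists>C1. \<forall>M t. M \<ge> 1 \<longrightarrow> t = real M powr (-1 / real CARD('n)) \<longrightarrow> 2 * R * t < \<mu> \<longrightarrow>
     finite {v. \<exists>k::int. \<exists>l\<in>L. \<bar>k\<bar> \<le> 3 * int M \<and> v = real_of_int k *\<^sub>R \<alpha> + l \<and> norm v \<le> R * t}
   \<and> card {v. \<exists>k::int. \<exists>l\<in>L. \<bar>k\<bar> \<le> 3 * int M \<and> v = real_of_int k *\<^sub>R \<alpha> + l \<and> norm v \<le> R * t} \<le> C1"
proof -
  define d where "d = CARD('n)"
  have d1: "d \<ge> 1" unfolding d_def by (simp add: Suc_le_eq)
  define \<sigma> where "\<sigma> = c / 6"
  have \<sigma>: "\<sigma> > 0" unfolding \<sigma>_def using c by simp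
  define C1 where "C1 = (\<Prod>i\<in>(UNIV::'n set). 2 * nat \<lceil>R / \<sigma>\<rceil> + 1)"
  show ?thesis
  proof (intro exI[of _ C1] allI impI)
    fix M :: nat and t :: real
    assume M1: "M \<ge> 1" and t: "t = real M powr (-1 / real CARD('n))" and small: "2 * R * t < \<mu>"
    define V where "V = {v. \<exists>k::int. \<exists>l\<in>L. \<bar>k\<bar> \<le> 3 * int M \<and> v = real_of_int k *\<^sub>R \<alpha> + l \<and> norm v \<le> R * t}"
    have tpos: "t > 0" unfolding t using M1 by simp
    define p where "p v = (1 / (\<sigma> * t)) *\<^sub>R v" for v :: "real^'n"
    have "finite V \<and> card V \<le> (\<Prod>i\<in>(UNIV::'n set). 2 * nat \<lceil>R / \<sigma>\<rceil> + 1)"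
    proof (rule grid_count[where A = V and p = p and \<beta> = "\<lambda>_. R / \<sigma>"])
      fix v i assume "v \<in> V"
      then have nv: "norm v \<le> R * t" unfolding V_def by blast
      have "\<bar>p v $ i\<bar> = \<bar>v $ i\<bar> / (\<sigma> * t)" unfolding p_def using \<sigma> tpos by (simp add: abs_mult)
      also have "\<dots> \<le> (R * t) / (\<sigma> * t)"
        using component_le_norm_cart[of v i] nv \<sigma> tpos by (intro divide_right_mono) auto
      also have "\<dots> = R / \<sigma>" using tpos by simp
      finally show "\<bar>p v $ i\<bar> \<le> R / \<sigma>" .
    next
      fix v v' assume vV: "v \<in> V" and v'V: "v' \<in> V" and cl: "\<And>i. \<bar>p v $ i - p v' $ i\<bar> < 1"
      have inf: "infnorm (v - v') \<le> \<sigma> * t"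
      proof (rule infnorm_le_cart)
        fix i
        have "\<bar>(v $ i - v' $ i) / (\<sigma> * t)\<bar> < 1" using cl[of i] unfolding p_def by (simp add: diff_divide_distrib)
        then have "\<bar>v $ i - v' $ i\<bar> < \<sigma> * t" using \<sigma> tpos by (simp add: abs_div)
        then show "\<bar>(v - v') $ i\<bar> \<le> \<sigma> * t" by simp
      qed
      obtain k l where kl: "\<bar>k\<bar> \<le> 3 * int M" "l \<in> L" "v = real_of_int k *\<^sub>R \<alpha> + l" "norm v \<le> R * t"
        using vV unfolding V_def by blast
      obtain k' l' where kl': "\<bar>k'\<bar> \<le> 3 * int M" "l' \<in> L" "v' = real_of_int k' *\<^sub>R \<alpha> + l'" "norm v' \<le> R * t"
        using v'V unfolding V_def by blast
      show "v = v'"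
      proof (rule ccontr)
        assume ne: "v \<noteq> v'"
        show False
        proof (cases "k = k'")
          case True
          then have "v - v' = l - l'" using kl kl' by simp
          moreover have "l - l' \<in> L" using kl(2) kl'(2) L lattice_diff by metis
          moreover have "l - l' \<noteq> 0" using ne \<open>v - v' = l - l'\<close> by auto
          ultimately have "\<mu> \<le> infnorm (v - v')" using mu(2) by simp
          also have "\<dots> \<le> norm (v - v')" by (rule infnorm_le_norm)
          also have "\<dots> \<le> norm v + norm v'" by (rule norm_triangle_ineq4)
          finally show False using kl(4) kl'(4) small by linarith
        next
          case False
          define q where "q = k - k'"
          define n where "n = nat \<bar>q\<bar>"
          have n1: "n \<ge> 1" using False unfolding n_def q_def by simp
          have n6: "real n \<le> 6 * real M"
          proof -
            have "\<bar>q\<bar> \<le> 6 * int M" unfolding q_def using kl(1) kl'(1) by linarith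
            then show ?thesis unfolding n_def by linarith
          qed
          have rn: "real n = \<bar>real_of_int q\<bar>" unfolding n_def by simp
          have "infnorm (v - v') = infnorm (real n *\<^sub>R \<alpha> - (if q > 0 then l' - l else l - l'))"
          proof (cases "q > 0")
            case True
            then have "real n = real_of_int q" using rn by simp
            then have e: "real_of_int k = real_of_int k' + real n" unfolding q_def by simp
            have "v - v' = real n *\<^sub>R \<alpha> - (l' - l)" unfolding kl(3) kl'(3) e scaleR_add_left
              by (simp add: algebra_simps)
            then show ?thesis using True by simp
          next
            case False
            then have "real n = - real_of_int q" using rn by simp
            then have e: "real_of_int k = real_of_int k' - real n" unfolding q_def by simp
            have "v - v' = - (real n *\<^sub>R \<alpha> - (l - l'))" unfolding kl(3) kl'(3) e scaleR_diff_left
              by (simp add: algebra_simps)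
            then have "infnorm (v - v') = infnorm (real n *\<^sub>R \<alpha> - (l - l'))" by (simp only: infnorm_neg)
            then show ?thesis using False by simp
          qed
          moreover have "(if q > 0 then l' - l else l - l') \<in> L" using kl(2) kl'(2) L lattice_diff by metis
          ultimately have b: "infnorm (v - v') > c * real n powr (-1 / real d)"
            using bad[OF n1] unfolding d_def by simp
          have "(6 * real M) powr (-1 / real d) \<le> real n powr (-1 / real d)"
            by (rule powr_mono2') (use n1 n6 d1 in auto)
          moreover have "(6 * real M) powr (-1 / real d) = 6 powr (-1 / real d) * t"
            unfolding t d_def by (simp add: powr_mult)
          moreover have "6 powr (-1) \<le> (6::real) powr (-1 / real d)"
            by (rule powr_mono) (use d1 in \<open>auto simp: field_simps\<close>)
          ultimately have "1/6 * t \<le> real n powr (-1 / real d)"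
            using tpos by (smt (verit) mult_right_mono powr_neg_one)
          then have "c * (1/6 * t) \<le> c * real n powr (-1 / real d)" using c by (intro mult_left_mono) auto
          then have "\<sigma> * t \<le> c * real n powr (-1 / real d)" unfolding \<sigma>_def by simp
          then show False using b inf by linarith
        qed
      qed
    qed
    then show "finite V \<and> card V \<le> C1" unfolding C1_def by simp
  qed
qed

theorem theorem1p6:
  fixes L :: "(real^'n) set" and \<alpha> :: "real^'n" and D :: "(real^'n) set"
  assumes "CARD('n) \<ge> 2"
    and "unimodular_lattice L"
    and "bad_approx \<alpha> L"
    and "D \<subseteq> sphere 0 1"
    and "\<exists>U. openin (top_of_set (sphere 0 1)) U \<and> U \<noteq> {} \<and> U \<subseteq> D"
  shows "\<exists>C::nat. \<forall>N::nat. N \<ge> 1 \<longrightarrow> gN N D \<alpha> L \<le> C"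
proof -
  define d where "d = CARD('n)"
  have d1: "d \<ge> 1" unfolding d_def by (simp add: Suc_le_eq)
  obtain Mx where Mx: "\<bar>det Mx\<bar> = 1" "L = lattice_of Mx"
    using assms(2) unfolding unimodular_lattice_def by blast
  have det: "det Mx \<noteq> 0" using Mx by auto
  obtain c where c: "c > 0" and badc: "\<forall>n::nat. n \<ge> 1 \<longrightarrow> (\<forall>l\<in>L.
      infnorm (real n *\<^sub>R \<alpha> - l) > c * real n powr (-1 / real CARD('n)))"
    using assms(3) unfolding bad_approx_def by blast
  have bad1: "\<And>n l. n \<ge> 1 \<Longrightarrow> l \<in> L \<Longrightarrow> infnorm (real n *\<^sub>R \<alpha> - l) > c * real n powr (-1 / real CARD('n))"
    using badc by blast
  have bad2: "infnorm (real n *\<^sub>R (-\<alpha>) - l) > c * real n powr (-1 / real CARD('n))"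
    if n: "n \<ge> 1" and lL: "l \<in> L" for n l
  proof -
    have ml: "-l \<in> L" using lattice_neg lL Mx(2) by metis
    have "real n *\<^sub>R (-\<alpha>) - l = - (real n *\<^sub>R \<alpha> - (-l))" by simp
    then have "infnorm (real n *\<^sub>R (-\<alpha>) - l) = infnorm (real n *\<^sub>R \<alpha> - (-l))" by (simp only: infnorm_neg)
    then show ?thesis using bad1[OF n ml] by simp
  qed
  obtain U where U: "openin (top_of_set (sphere 0 1)) U" "U \<noteq> {}" "U \<subseteq> D" using assms(5) by blast
  obtain u0 where u0U: "u0 \<in> U" using U(2) by blast
  have "u0 \<in> sphere 0 1" using openin_imp_subset[OF U(1)] u0U by blast
  then have u0: "norm u0 = 1" by simp
  obtain \<eta> where eta: "\<eta> > 0" "\<And>x'. x' \<in> sphere 0 1 \<Longrightarrow> dist x' u0 < \<eta> \<Longrightarrow> x' \<in> U"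
    using U(1) u0U unfolding openin_euclidean_subtopology_iff by blast
  have cone: "x \<in> D" if "norm x = 1" "norm (x - u0) < \<eta>" for x
    using eta(2)[of x] that U(3) by (auto simp: dist_norm)
  obtain R1 N1 where R1: "R1 > 0" and C1: "\<forall>M\<ge>N1. \<exists>K\<in>{1..M}. \<exists>l\<in>L. real K *\<^sub>R \<alpha> + l \<in> pos_cone D \<and>
            norm (real K *\<^sub>R \<alpha> + l) \<le> R1 * real M powr (-1 / real CARD('n))"
    using core[OF Mx(2) det c bad1 u0 eta(1) cone] by blast
  obtain R2 N2 where R2: "R2 > 0" and C2: "\<forall>M\<ge>N2. \<exists>K\<in>{1..M}. \<exists>l\<in>L. real K *\<^sub>R (-\<alpha>) + l \<in> pos_cone D \<and>
            norm (real K *\<^sub>R (-\<alpha>) + l) \<le> R2 * real M powr (-1 / real CARD('n))"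
    using core[OF Mx(2) det c bad2 u0 eta(1) cone] by blast
  define R where "R = max R1 R2"
  have R: "R > 0" "R1 \<le> R" "R2 \<le> R" unfolding R_def using R1 by auto
  obtain \<mu> where mu: "\<mu> > 0" "\<And>l. l \<in> L \<Longrightarrow> l \<noteq> 0 \<Longrightarrow> \<mu> \<le> infnorm l"
    using lattice_min[OF Mx(2) det] by blast
  obtain Cp where Cp: "\<forall>M t. M \<ge> 1 \<longrightarrow> t = real M powr (-1 / real CARD('n)) \<longrightarrow> 2 * R * t < \<mu> \<longrightarrow>
     finite {v. \<exists>k::int. \<exists>l\<in>L. \<bar>k\<bar> \<le> 3 * int M \<and> v = real_of_int k *\<^sub>R \<alpha> + l \<and> norm v \<le> R * t}
   \<and> card {v. \<exists>k::int. \<exists>l\<in>L. \<bar>k\<bar> \<le> 3 * int M \<and> v = real_of_int k *\<^sub>R \<alpha> + l \<and> norm v \<le> R * t} \<le> Cp"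
    using packing[OF Mx(2) mu c bad1 R(1)] by blast
  define \<tau> where "\<tau> = \<mu> / (4 * R)"
  have \<tau>: "\<tau> > 0" unfolding \<tau>_def using mu R by simp
  define M0 where "M0 = max (max N1 N2) (nat \<lceil>\<tau> powr (- real d)\<rceil> + 1)"
  define Nst where "Nst = 2 * M0 + 3"
  show ?thesis
  proof (intro exI[of _ "max Nst Cp"] allI impI)
    fix N :: nat assume N1: "N \<ge> 1"
    show "gN N D \<alpha> L \<le> max Nst Cp"
    proof (cases "N < Nst")
      case True
      have "gN N D \<alpha> L \<le> card {1..N}" unfolding gN_def by (rule card_image_le) simp
      then show ?thesis using True by simp
    next
      case False
      define M where "M = (N - 1) div 2"
      have MM0: "M \<ge> M0" "M \<ge> 1" and NM: "N \<le> 2*M + 2" "2*M + 1 \<le> N"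
        using False unfolding M_def Nst_def by auto
      have MN12: "M \<ge> N1" "M \<ge> N2" using MM0 unfolding M0_def by auto
      have Mge: "real M \<ge> \<tau> powr (- real d)"
      proof -
        have "\<tau> powr (- real d) \<le> real (nat \<lceil>\<tau> powr (- real d)\<rceil>)" by linarith
        also have "\<dots> \<le> real M"
        proof -
          have "nat \<lceil>\<tau> powr (- real d)\<rceil> + 1 \<le> M" using MM0(1) unfolding M0_def by (simp only: max.bounded_iff)
          then have "nat \<lceil>\<tau> powr (- real d)\<rceil> \<le> M" by linarith
          then show ?thesis by (simp only: of_nat_le_iff)
        qed
        finally show ?thesis .
      qed
      define t where "t = real M powr (-1 / real CARD('n))"
      have tpos: "t > 0" unfolding t_def using MM0 by simp
      have tt: "t \<le> \<tau>"
      proof -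
        have "t \<le> (\<tau> powr (- real d)) powr (-1/real d)" unfolding t_def d_def[symmetric]
          by (rule powr_mono2') (use Mge \<tau> d1 in auto)
        also have "\<dots> = \<tau>" using \<tau> d1 by (simp add: powr_powr powr_one)
        finally show ?thesis .
      qed
      have small: "2 * R * t < \<mu>"
      proof -
        have "2 * R * t \<le> 2 * R * \<tau>" using tt R by simp
        also have "\<dots> = \<mu> / 2" unfolding \<tau>_def using R by simp
        finally show ?thesis using mu by simp
      qed
      define V where "V = {v. \<exists>k::int. \<exists>l\<in>L. \<bar>k\<bar> \<le> 3 * int M \<and> v = real_of_int k *\<^sub>R \<alpha> + l \<and> norm v \<le> R * t}"
      have V: "finite V" "card V \<le> Cp" using Cp MM0(2) small unfolding V_def t_def by blast+
      have key: "delta D \<alpha> L n N \<in> norm ` V" if n: "n \<in> {1..N}" for n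
      proof -
        define S where "S = {norm ((real m - real n) *\<^sub>R \<alpha> + l) | m l. 1 \<le> m \<and> m \<le> N \<and> l \<in> L \<and>
            (real m - real n) *\<^sub>R \<alpha> + l \<in> pos_cone D}"
        have dS: "delta D \<alpha> L n N = Inf S" unfolding delta_def S_def by simp
        obtain x0 where x0: "x0 \<in> S" "x0 \<le> R * t"
        proof (cases "n \<le> N - M")
          case True
          obtain K l where K: "K \<in> {1..M}" "l \<in> L" "real K *\<^sub>R \<alpha> + l \<in> pos_cone D"
            "norm (real K *\<^sub>R \<alpha> + l) \<le> R1 * t"
            using C1 MN12 unfolding t_def by blast
          define m where "m = n + K"
          have m: "1 \<le> m" "m \<le> N" using K(1) True n unfolding m_def by auto
          have e: "real m - real n = real K" unfolding m_def by simp
          have "R1 * t \<le> R * t" using R tpos by (intro mult_right_mono) auto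
          then show ?thesis using that[of "norm ((real m - real n) *\<^sub>R \<alpha> + l)"] m K e
            unfolding S_def by fastforce
        next
          case False
          obtain K l where K: "K \<in> {1..M}" "l \<in> L" "real K *\<^sub>R (-\<alpha>) + l \<in> pos_cone D"
            "norm (real K *\<^sub>R (-\<alpha>) + l) \<le> R2 * t"
            using C2 MN12 unfolding t_def by blast
          define m where "m = n - K"
          have m: "1 \<le> m" "m \<le> N" using K(1) False n NM unfolding m_def by auto
          have e: "real m - real n = - real K" unfolding m_def using K(1) False NM by auto
          have e2: "(real m - real n) *\<^sub>R \<alpha> + l = real K *\<^sub>R (-\<alpha>) + l" unfolding e by simp
          have "R2 * t \<le> R * t" using R tpos by (intro mult_right_mono) auto
          then show ?thesis using that[of "norm ((real m - real n) *\<^sub>R \<alpha> + l)"] m K e2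
            unfolding S_def by fastforce
        qed
        define F where "F = S \<inter> {..R * t}"
        have FV: "F \<subseteq> norm ` V"
        proof
          fix x assume "x \<in> F"
          then obtain m l where ml: "1 \<le> m" "m \<le> N" "l \<in> L" "x = norm ((real m - real n) *\<^sub>R \<alpha> + l)" "x \<le> R * t"
            unfolding F_def S_def by blast
          define k where "k = int m - int n"
          have k: "\<bar>k\<bar> \<le> 3 * int M" unfolding k_def abs_le_iff using ml(1,2) n NM MM0(2) by auto
          have ek: "real_of_int k = real m - real n" unfolding k_def by simp
          have "(real m - real n) *\<^sub>R \<alpha> + l \<in> V" unfolding V_def
            using k ml ek by (intro CollectI exI[of _ k] bexI[of _ l]) auto
          then show "x \<in> norm ` V" using ml(4) by blast
        qed
        have fF: "finite F" using finite_subset[OF FV] V(1) by blast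
        have x0F: "x0 \<in> F" unfolding F_def using x0 by simp
        define z where "z = Min F"
        have zF: "z \<in> F" unfolding z_def using fF x0F Min_in by blast
        have "Inf S = z"
        proof (rule cInf_eq_minimum)
          show "z \<in> S" using zF unfolding F_def by simp
          fix x assume xS: "x \<in> S"
          show "z \<le> x"
          proof (cases "x \<le> R * t")
            case True
            then have "x \<in> F" unfolding F_def using xS by simp
            then show ?thesis unfolding z_def using fF by simp
          next
            case False
            have "z \<le> x0" unfolding z_def using fF x0F by simp
            then show ?thesis using x0(2) False by linarith
          qed
        qed
        then show ?thesis using dS zF FV by auto
      qed
      have "gN N D \<alpha> L = card ((\<lambda>n. delta D \<alpha> L n N) ` {1..N})" by (simp add: gN_def)
      also have "\<dots> \<le> card (norm ` V)" by (rule card_mono) (use V(1) key in auto)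
      also have "\<dots> \<le> card V" by (rule card_image_le) (rule V(1))
      also have "\<dots> \<le> Cp" by (rule V(2))
      finally show ?thesis by simp
    qed
  qed
qed

end
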